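(* An infinite set $S\subset\mathbb N$ is superficial if and only if $\mathbb N$ can be partitioned into three pairwise disjoint sets $\mathbb A,\mathbb B,\mathbb C$ such that: (i) $\mathbb A$ (possibly empty) has natural density zero; (ii) $\mathbb B$ is either empty or a union of infinitely many intervals of consecutive integers whose lengths tend to infinity, and $\mathbb B\subset S$; (iii) $\mathbb C$ is either empty or a union of infinitely many intervals of consecutive integers whose lengths tend to infinity, and $\mathbb C\cap S=\emptyset$.
   Context: For $S\subset\mathbb N$ let $y=\mathbbm 1_S\in\{0,1\}^{\mathbb N}$. For a point $z$ of a shift space $\Lambda^{\mathbb N}$ with shift $\sigma$, let $A_n(z)=\frac1n\sum_{i=0}^{n-1}\delta_{\sigma^i z}$; a shift-invariant measure $\nu$ is quasi-generated by $z$ if it is a weak-* accumulation point of $(A_n(z))_n$, and $\mathcal M_z$ denotes the set of all measures quasi-generated by $z$. An infinite set $S\subset\mathbb N$ is called superficial if $\mathcal M_y\subset\mathrm{conv}\{\delta_{\bar0},\delta_{\bar1}\}$, where $\delta_{\bar0},\delta_{\bar1}$ are the point masses at the constant sequences $(0,0,\dots)$ and $(1,1,\dots)$. *)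

theory Defs
  imports "HOL-Probability.Probability"
begin

text \<open>The space \<open>nat \<Rightarrow> bool\<close> carries the product topology of the discrete space bool,
  i.e. it is the compact metrizable space {0,1}^N, with True read as 1 and False as 0.\<close>

definition shift :: "(nat \<Rightarrow> 'a) \<Rightarrow> nat \<Rightarrow> 'a" where
  "shift z = (\<lambda>i. z (Suc i))"

text \<open>Integral of f against the empirical measure A_n(z) = (1/n) sum_{i<n} delta_{shift^i z}.\<close>

definition empirical_avg :: "(nat \<Rightarrow> 'a) \<Rightarrow> nat \<Rightarrow> ((nat \<Rightarrow> 'a) \<Rightarrow> real) \<Rightarrow> real" where
  "empirical_avg z n f = (1 / real n) * (\<Sum>i<n. f ((shift ^^ i) z))"

text \<open>A shift-invariant Borel probability measure nu is quasi-generated by z if it is a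
  weak-* accumulation point of the sequence A_n(z), i.e. the limit (in the weak-* topology,
  tested against all continuous real functions) of a subsequence A_{r k}(z).\<close>

definition quasi_generated ::
    "(nat \<Rightarrow> 'a::topological_space) \<Rightarrow> (nat \<Rightarrow> 'a) measure \<Rightarrow> bool" where
  "quasi_generated z \<nu> \<longleftrightarrow>
     prob_space \<nu> \<and> sets \<nu> = sets borel \<and>
     (\<forall>A\<in>sets \<nu>. emeasure \<nu> (shift -` A \<inter> space \<nu>) = emeasure \<nu> A) \<and>
     (\<exists>r::nat \<Rightarrow> nat. strict_mono r \<and>
        (\<forall>f::(nat \<Rightarrow> 'a) \<Rightarrow> real. continuous_on UNIV f \<longrightarrow>
           (\<lambda>k. empirical_avg z (r k) f) \<longlonglongrightarrow> integral\<^sup>L \<nu> f))"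

definition quasi_generated_set :: "(nat \<Rightarrow> 'a::topological_space) \<Rightarrow> (nat \<Rightarrow> 'a) measure set" where
  "quasi_generated_set z = {\<nu>. quasi_generated z \<nu>}"

definition ind_seq :: "nat set \<Rightarrow> nat \<Rightarrow> bool" where
  "ind_seq S = (\<lambda>i. i \<in> S)"

definition in_conv_deltas :: "(nat \<Rightarrow> bool) measure \<Rightarrow> bool" where
  "in_conv_deltas \<nu> \<longleftrightarrow> sets \<nu> = sets borel \<and>
     (\<exists>p::real. 0 \<le> p \<and> p \<le> 1 \<and>
        (\<forall>A\<in>sets \<nu>. emeasure \<nu> A =
            ennreal (p * indicator A (\<lambda>_. False) + (1 - p) * indicator A (\<lambda>_. True))))"

definition superficial :: "nat set \<Rightarrow> bool" where
  "superficial S \<longleftrightarrow> infinite S \<and>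
     (\<forall>\<nu>\<in>quasi_generated_set (ind_seq S). in_conv_deltas \<nu>)"

definition density_zero :: "nat set \<Rightarrow> bool" where
  "density_zero A \<longleftrightarrow> (\<lambda>n. real (card (A \<inter> {..<n})) / real n) \<longlonglongrightarrow> 0"

text \<open>B is a union of infinitely many intervals of consecutive integers [a_k, b_k)
  whose lengths tend to infinity (lengths tending to infinity forces infinitely many
  distinct intervals).\<close>
definition union_long_intervals :: "nat set \<Rightarrow> bool" where
  "union_long_intervals B \<longleftrightarrow>
     (\<exists>a b :: nat \<Rightarrow> nat. B = (\<Union>k. {a k..<b k}) \<and>
        filterlim (\<lambda>k. b k - a k) at_top sequentially)"

end

theory Submission
  imports Defs "HOL-Library.Infinite_Set"
begin

instance bool :: second_countable_topology
proof
  show "\<exists>B::bool set set. countable B \<and> open = generate_topology B"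
  proof (intro exI[of _ UNIV] conjI)
    show "open = generate_topology (UNIV :: bool set set)"
    proof (rule ext, rule iffI)
      fix x :: "bool set" assume "open x" then show "generate_topology UNIV x"
        by (intro generate_topology.Basis) simp
    next
      fix x :: "bool set" show "generate_topology UNIV x \<Longrightarrow> open x" by (rule discrete_topology_class.open_discrete)
    qed
  qed simp
qed

lemma shift_pow: "(shift ^^ i) z = (\<lambda>j. z (i + j))"
  by (induction i arbitrary: z) (auto simp: shift_def)

lemma continuous_shift: "continuous_on UNIV (shift :: (nat \<Rightarrow> 'a::topological_space) \<Rightarrow> _)"
  unfolding shift_def by (intro continuous_on_coordinatewise_then_product continuous_on_product_coordinates)

lemma compact_UNIV_fun_bool: "compact (UNIV :: (nat \<Rightarrow> bool) set)"
proof -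
  have "compact_space (product_topology (\<lambda>i::nat. (euclidean :: bool topology)) UNIV)"
    by (subst compact_space_product_topology) (auto simp: compact_space_def intro!: finite_imp_compact)
  then show ?thesis by (simp add: euclidean_product_topology compact_space_def)
qed

lemma finite_dep_continuous:
  fixes h :: "(nat \<Rightarrow> bool) \<Rightarrow> 'b::topological_space"
  assumes "\<And>x x'. (\<forall>i<n. x i = x' i) \<Longrightarrow> h x = h x'"
  shows "continuous_on UNIV h"
proof -
  have cyl: "open {x'. \<forall>i\<in>{..<n}. x' (id i) \<in> {x i}}" for x :: "nat \<Rightarrow> bool"
    by (intro product_topology_basis' discrete_topology_class.open_discrete) auto
  show ?thesis
  proof (subst continuous_on_open_vimage[OF open_UNIV], intro allI impI)
    fix V :: "'b set" assume "open V"
    have "h -` V \<inter> UNIV = (\<Union>x\<in>h -` V. {x'. \<forall>i\<in>{..<n}. x' (id i) \<in> {x i}})"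
      using assms by auto
    moreover have "open (\<Union>x\<in>h -` V. {x'. \<forall>i\<in>{..<n}. x' (id i) \<in> {x i}})"
      by (intro open_UN ballI cyl)
    ultimately show "open (h -` V \<inter> UNIV)" by simp
  qed
qed

definition cf :: "bool \<Rightarrow> real" where "cf b = (if b then 2 else 0)"

definition psi :: "(nat \<Rightarrow> bool) \<Rightarrow> real" where
  "psi x = (\<Sum>i. cf (x i) * (1/4) ^ Suc i)"

lemma cf_bounds: "0 \<le> cf b" "cf b \<le> 2" by (auto simp: cf_def)

lemma geom_sum: "(\<lambda>i. 2 * (1/4::real) ^ Suc i) sums (2/3)"
proof -
  have "(\<lambda>i. (1/4::real) ^ i) sums (1 / (1 - 1/4))" by (rule geometric_sums) simp
  then have "(\<lambda>i. (1/2) * (1/4::real) ^ i) sums ((1/2) * (1 / (1 - 1/4)))" by (rule sums_mult)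
  then show ?thesis by simp
qed

lemma psi_summable: "summable (\<lambda>i. cf (x i) * (1/4::real) ^ Suc i)"
  by (rule summable_comparison_test'[OF sums_summable[OF geom_sum]]) (auto simp: cf_def)

lemma psi_nonneg: "0 \<le> psi x"
  unfolding psi_def by (intro suminf_nonneg psi_summable) (auto simp: cf_def)

lemma psi_le: "psi x \<le> 2/3"
proof -
  have "psi x \<le> (\<Sum>i. 2 * (1/4::real) ^ Suc i)"
    unfolding psi_def by (intro suminf_le psi_summable sums_summable[OF geom_sum]) (auto simp: cf_def)
  then show ?thesis using sums_unique[OF geom_sum] by simp
qed

lemma psi_rec: "psi x = (cf (x 0) + psi (shift x)) / 4"
proof -
  have "psi x = cf (x 0) * (1/4) + (\<Sum>i. cf (x (Suc i)) * (1/4::real) ^ Suc (Suc i))"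
    unfolding psi_def using suminf_split_head[OF psi_summable[of x]] by simp
  also have "(\<lambda>i. cf (x (Suc i)) * (1/4::real) ^ Suc (Suc i)) = (\<lambda>i. (1/4) * (cf (shift x i) * (1/4) ^ Suc i))"
    by (simp add: shift_def fun_eq_iff)
  also have "(\<Sum>i. (1/4) * (cf (shift x i) * (1/4::real) ^ Suc i)) = (1/4) * psi (shift x)"
    unfolding psi_def by (rule suminf_mult[OF psi_summable])
  finally show ?thesis by simp
qed

lemma digit: "\<lfloor>psi x * 4 ^ Suc i\<rfloor> mod 4 = (if x i then 2 else 0)"
proof (induction i arbitrary: x)
  case 0
  have "psi x * 4 = cf (x 0) + psi (shift x)" using psi_rec[of x] by simp
  moreover have "0 \<le> psi (shift x)" "psi (shift x) < 1" using psi_nonneg psi_le[of "shift x"] by auto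
  ultimately have "\<lfloor>psi x * 4\<rfloor> = (if x 0 then 2 else 0)"
    by (auto simp: cf_def floor_eq_iff)
  then show ?case by simp
next
  case (Suc i)
  have "psi x * 4 ^ Suc (Suc i) = (psi x * 4) * 4 ^ Suc i" by simp
  also have "psi x * 4 = cf (x 0) + psi (shift x)" using psi_rec[of x] by simp
  also have "(cf (x 0) + psi (shift x)) * 4 ^ Suc i = cf (x 0) * 4 ^ Suc i + psi (shift x) * 4 ^ Suc i"
    by (simp add: distrib_right)
  also have "cf (x 0) * 4 ^ Suc i = of_int ((if x 0 then 2 else 0) * 4 ^ Suc i)" by (simp add: cf_def)
  finally have eq: "psi x * 4 ^ Suc (Suc i) = psi (shift x) * 4 ^ Suc i + of_int ((if x 0 then 2 else 0) * 4 ^ Suc i)"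
    by simp
  define k :: int where "k = (if x 0 then 2 else 0) * 4 ^ Suc i"
  have "\<lfloor>psi x * 4 ^ Suc (Suc i)\<rfloor> = \<lfloor>psi (shift x) * 4 ^ Suc i\<rfloor> + k"
    unfolding eq k_def[symmetric] by (rule floor_add_int[symmetric])
  moreover have "k mod 4 = 0" unfolding k_def by simp
  ultimately have "\<lfloor>psi x * 4 ^ Suc (Suc i)\<rfloor> mod 4 = \<lfloor>psi (shift x) * 4 ^ Suc i\<rfloor> mod 4"
    by (simp add: mod_add_right_eq[symmetric])
  also have "\<dots> = (if x (Suc i) then 2 else 0)" using Suc.IH[of "shift x"] by (simp add: shift_def)
  finally show ?case .
qed

definition phi :: "real \<Rightarrow> nat \<Rightarrow> bool" where
  "phi t = (\<lambda>i. \<lfloor>t * 4 ^ Suc i\<rfloor> mod 4 = 2)"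

lemma phi_psi: "phi (psi x) = x"
proof (rule ext)
  fix i show "phi (psi x) i = x i" using digit[of x i] unfolding phi_def by (cases "x i") auto
qed

lemma continuous_psi: "continuous_on UNIV psi"
proof -
  have ul: "uniform_limit UNIV (\<lambda>n x. \<Sum>i<n. cf (x i) * (1/4::real) ^ Suc i) psi sequentially"
    unfolding psi_def
    by (rule Weierstrass_m_test[OF _ sums_summable[OF geom_sum]]) (auto simp: cf_def)
  have "continuous_on UNIV (\<lambda>x. \<Sum>i<n. cf (x i) * (1/4::real) ^ Suc i)" for n
  proof (intro continuous_intros)
    fix i
    show "continuous_on UNIV (\<lambda>x::nat\<Rightarrow>bool. cf (x i))"
      using continuous_on_compose[OF continuous_on_product_coordinates[of i] Topological_Spaces.continuous_on_discrete[of "range (\<lambda>x::nat\<Rightarrow>bool. x i)" cf]]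
      by (simp add: o_def)
  qed
  then show ?thesis by (intro uniform_limit_theorem[OF _ ul]) auto
qed

lemma measurable_phi: "phi \<in> borel_measurable borel"
proof (rule measurable_coordinatewise_then_product)
  fix i
  show "(\<lambda>t. phi t i) \<in> borel_measurable borel"
  proof -
    have 1: "(\<lambda>t::real. \<lfloor>t * 4 ^ Suc i\<rfloor>) \<in> measurable borel (count_space UNIV)"
      by (rule measurable_compose[OF _ measurable_real_floor]) simp
    have 2: "(\<lambda>t::real. \<lfloor>t * 4 ^ Suc i\<rfloor> mod 4) \<in> measurable borel (count_space UNIV)"
      by (rule measurable_compose[OF 1]) simp
    have "Measurable.pred borel (\<lambda>t::real. \<lfloor>t * 4 ^ Suc i\<rfloor> mod 4 = 2)" by (rule pred_count_space_const1[OF 2])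
    then show ?thesis unfolding phi_def Measurable.pred_def
      by (subst measurable_cong_sets[OF refl sets_borel_eq_count_space]) simp
  qed
qed

definition emp_meas :: "(nat \<Rightarrow> bool) \<Rightarrow> nat \<Rightarrow> real measure" where
  "emp_meas y n = distr (measure_pmf (pmf_of_set {..<Suc n})) borel (\<lambda>i. psi ((shift ^^ i) y))"

lemma emp_meas_rd: "real_distribution (emp_meas y n)"
  unfolding emp_meas_def real_distribution_def real_distribution_axioms_def
  by (auto intro!: prob_space.prob_space_distr prob_space_measure_pmf)

lemma emp_meas_integral:
  assumes "g \<in> borel_measurable borel"
  shows "integral\<^sup>L (emp_meas y n) g = empirical_avg y (Suc n) (\<lambda>z. g (psi z))"
proof -
  have "integral\<^sup>L (emp_meas y n) g = integral\<^sup>L (measure_pmf (pmf_of_set {..<Suc n})) (\<lambda>i. g (psi ((shift ^^ i) y)))"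
    unfolding emp_meas_def by (rule integral_distr) (auto simp: assms)
  also have "\<dots> = (\<Sum>i<Suc n. g (psi ((shift ^^ i) y))) / real (Suc n)"
    by (subst integral_pmf_of_set) auto
  finally show ?thesis by (simp add: empirical_avg_def)
qed

lemma emp_meas_tight: "tight (emp_meas y)"
  unfolding tight_def
proof (intro conjI allI impI emp_meas_rd)
  fix e :: real assume "e > 0"
  have "measure (emp_meas y n) {-1<..1} = 1" for n
  proof -
    interpret prob_space "measure_pmf (pmf_of_set {..<Suc n})" by (rule prob_space_measure_pmf)
    have h: "-1 < psi z" "psi z \<le> 1" for z using psi_nonneg[of z] psi_le[of z] by linarith+
    have "(\<lambda>i. psi ((shift ^^ i) y)) -` {-1<..1} = UNIV"
      using h by auto
    then show ?thesis unfolding emp_meas_def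
      by (subst measure_distr) (auto simp: measure_pmf.prob_space)
  qed
  with \<open>e > 0\<close> show "\<exists>a b::real. a < b \<and> (\<forall>n. 1 - e < measure (emp_meas y n) {a<..b})"
    by (intro exI[of _ "-1"] exI[of _ 1]) auto
qed

lemma cont_bounded:
  fixes f :: "(nat \<Rightarrow> bool) \<Rightarrow> real"
  assumes "continuous_on UNIV f"
  obtains B where "B \<ge> 0" "\<And>x. \<bar>f x\<bar> \<le> B"
proof -
  have "compact (f ` UNIV)" by (rule compact_continuous_image[OF assms compact_UNIV_fun_bool])
  then have "bounded (f ` UNIV)" by (rule compact_imp_bounded)
  then obtain B where "\<And>x. \<bar>f x\<bar> \<le> B" by (auto simp: bounded_iff)
  moreover then have "B \<ge> 0" by (meson abs_ge_zero order.trans)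
  ultimately show ?thesis using that by blast
qed

lemma emp_shift_diff:
  "empirical_avg y n (\<lambda>z. f (shift z)) - empirical_avg y n f = (f ((shift ^^ n) y) - f y) / real n"
proof -
  have "(\<Sum>i<n. f (shift ((shift ^^ i) y))) - (\<Sum>i<n. f ((shift ^^ i) y)) = (\<Sum>i<n. f ((shift ^^ Suc i) y) - f ((shift ^^ i) y))"
    by (simp add: sum_subtractf)
  also have "\<dots> = f ((shift ^^ n) y) - f y" by (subst sum_lessThan_telescope) simp
  finally have eq: "(\<Sum>i<n. f (shift ((shift ^^ i) y))) - (\<Sum>i<n. f ((shift ^^ i) y)) = f ((shift ^^ n) y) - f y" .
  have "empirical_avg y n (\<lambda>z. f (shift z)) - empirical_avg y n f =
     ((\<Sum>i<n. f (shift ((shift ^^ i) y))) - (\<Sum>i<n. f ((shift ^^ i) y))) / real n"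
    by (simp add: empirical_avg_def diff_divide_distrib)
  then show ?thesis unfolding eq .
qed

lemma emp_shift_tendsto:
  fixes f :: "(nat \<Rightarrow> bool) \<Rightarrow> real"
  assumes "continuous_on UNIV f"
  shows "(\<lambda>n. empirical_avg y n (\<lambda>z. f (shift z)) - empirical_avg y n f) \<longlonglongrightarrow> 0"
proof -
  obtain B where B: "B \<ge> 0" "\<And>x. \<bar>f x\<bar> \<le> B" using cont_bounded[OF assms] by blast
  have "(\<lambda>n. (2 * B) * (1 / real n)) \<longlonglongrightarrow> (2 * B) * 0"
    by (intro tendsto_mult tendsto_const lim_1_over_n)
  then have lim: "(\<lambda>n. 2 * B / real n) \<longlonglongrightarrow> 0" by simp
  show ?thesis unfolding emp_shift_diff
  proof (rule Lim_null_comparison[OF _ lim], intro always_eventually allI)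
    fix n
    have "\<bar>f ((shift ^^ n) y) - f y\<bar> \<le> 2 * B" using B(2)[of "(shift ^^ n) y"] B(2)[of y] by linarith
    then show "norm ((f ((shift ^^ n) y) - f y) / real n) \<le> 2 * B / real n"
      by (simp add: divide_right_mono)
  qed
qed

lemma sets_PiM_bool: "sets (Pi\<^sub>M UNIV (\<lambda>_::nat. (borel :: bool measure))) = sets (borel :: (nat \<Rightarrow> bool) measure)"
  by (rule sets_PiM_equal_borel)

lemma exists_qg:
  fixes y :: "nat \<Rightarrow> bool" and r0 :: "nat \<Rightarrow> nat"
  assumes r0: "strict_mono r0"
  shows "\<exists>\<nu> r. strict_mono r \<and> quasi_generated y \<nu> \<and>
     (\<forall>f. continuous_on UNIV f \<longrightarrow> (\<lambda>k. empirical_avg y (r0 (r k)) f) \<longlonglongrightarrow> integral\<^sup>L \<nu> f)"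
proof -
  define s where "s k = r0 (Suc k) - 1" for k
  have r0ge: "r0 k \<ge> k" for k using seq_suble[OF r0] .
  have s: "strict_mono s"
    unfolding strict_mono_Suc_iff s_def
  proof
    fix k
    have "r0 (Suc k) < r0 (Suc (Suc k))" using r0 by (simp add: strict_mono_Suc_iff)
    moreover have "r0 (Suc k) \<ge> 1" using r0ge[of "Suc k"] by simp
    ultimately show "r0 (Suc k) - 1 < r0 (Suc (Suc k)) - 1" by simp
  qed
  obtain r M where r: "strict_mono r" and M: "real_distribution M"
    and wc: "weak_conv_m (emp_meas y \<circ> s \<circ> r) M"
    using tight_imp_convergent_subsubsequence[OF emp_meas_tight s] by blast
  interpret M: real_distribution M by (rule M)
  define r' where "r' k = Suc (r k)" for k
  have r': "strict_mono r'" using r unfolding r'_def strict_mono_def by simp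
  have r0r': "r0 (r' k) = Suc (s (r k))" for k
    using r0ge[of "Suc (r k)"] unfolding r'_def s_def by simp
  have conv: "(\<lambda>k. empirical_avg y (r0 (r' k)) (\<lambda>z. g (psi z))) \<longlonglongrightarrow> integral\<^sup>L M g"
    if g: "continuous_on UNIV g" and B: "\<And>x. \<bar>g x\<bar> \<le> B" for g :: "real \<Rightarrow> real" and B
  proof -
    have "(\<lambda>k. integral\<^sup>L ((emp_meas y \<circ> s \<circ> r) k) g) \<longlonglongrightarrow> integral\<^sup>L M g"
      by (rule weak_conv_imp_integral_bdd_continuous_conv[OF _ M wc, where B=B])
         (use emp_meas_rd g B in \<open>auto simp: continuous_on_eq_continuous_at[OF open_UNIV]\<close>)
    moreover have "integral\<^sup>L ((emp_meas y \<circ> s \<circ> r) k) g = empirical_avg y (r0 (r' k)) (\<lambda>z. g (psi z))" for k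
      using emp_meas_integral[OF borel_measurable_continuous_onI[OF g]] r0r' by simp
    ultimately show ?thesis by simp
  qed
  define K where "K = range psi"
  have K_compact: "compact K" unfolding K_def
    by (rule compact_continuous_image[OF continuous_psi compact_UNIV_fun_bool])
  then have K_closed: "closed K" by (rule compact_imp_closed)
  have K_ne: "K \<noteq> {}" unfolding K_def by simp
  have AE_K: "AE t in M. t \<in> K"
  proof -
    define g where "g t = min 1 (infdist t K)" for t
    have gc: "continuous_on UNIV g" unfolding g_def by (intro continuous_intros)
    have gb: "\<bar>g t\<bar> \<le> 1" for t unfolding g_def using infdist_nonneg[of t K] by auto
    have g0: "g (psi z) = 0" for z unfolding g_def K_def by simp
    have "(\<lambda>k. empirical_avg y (r0 (r' k)) (\<lambda>z. g (psi z))) \<longlonglongrightarrow> integral\<^sup>L M g"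
      by (rule conv[OF gc gb])
    moreover have "empirical_avg y n (\<lambda>z. g (psi z)) = 0" for n
      by (simp add: empirical_avg_def g0)
    ultimately have "(\<lambda>k. 0::real) \<longlonglongrightarrow> integral\<^sup>L M g" by simp
    then have "integral\<^sup>L M g = 0" using LIMSEQ_unique[OF tendsto_const] by metis
    moreover have gm: "g \<in> borel_measurable M"
      using borel_measurable_continuous_onI[OF gc] by simp
    moreover have "integrable M g"
      by (rule M.integrable_const_bound[where B=1]) (use gb gm in auto)
    ultimately have "AE t in M. g t = 0"
      by (subst integral_nonneg_eq_0_iff_AE[symmetric]) (auto simp: g_def infdist_nonneg)
    then show ?thesis
    proof (rule AE_mp, intro AE_I2 impI)
      fix t assume "g t = 0"
      then have "infdist t K = 0" unfolding g_def by (auto simp: min_def split: if_splits)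
      then show "t \<in> K" using in_closure_iff_infdist_zero[OF K_ne] K_closed closure_closed by blast
    qed
  qed
  define \<nu> where "\<nu> = distr M borel phi"
  have phi_M: "phi \<in> measurable M borel" using measurable_phi by simp
  have sets_nu: "sets \<nu> = sets borel" unfolding \<nu>_def by simp
  have space_nu: "space \<nu> = UNIV" unfolding \<nu>_def by simp
  interpret nu: prob_space \<nu> unfolding \<nu>_def by (rule M.prob_space_distr[OF phi_M])
  have lim: "(\<lambda>k. empirical_avg y (r0 (r' k)) f) \<longlonglongrightarrow> integral\<^sup>L \<nu> f"
    if f: "continuous_on UNIV f" for f :: "(nat \<Rightarrow> bool) \<Rightarrow> real"
  proof -
    obtain B where B: "B \<ge> 0" "\<And>x. \<bar>f x\<bar> \<le> B" using cont_bounded[OF f] by blast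
    have "continuous_on K phi" unfolding K_def
      by (rule continuous_on_inv[OF continuous_psi compact_UNIV_fun_bool]) (simp add: phi_psi)
    then have hc: "continuous_on K (\<lambda>t. f (phi t))"
      by (rule continuous_on_compose2[OF f]) auto
    have cK: "closedin (top_of_set UNIV) K" using K_closed by simp
    have bnd: "\<And>t. t \<in> K \<Longrightarrow> norm (f (phi t)) \<le> B" using B(2) by simp
    obtain g where g: "continuous_on UNIV g" "\<And>t. t \<in> K \<Longrightarrow> g t = f (phi t)"
      "\<And>t. t \<in> UNIV \<Longrightarrow> norm (g t) \<le> B"
      using Tietze[OF hc cK B(1) bnd] by blast
    have "(\<lambda>k. empirical_avg y (r0 (r' k)) (\<lambda>z. g (psi z))) \<longlonglongrightarrow> integral\<^sup>L M g"
      by (rule conv[OF g(1)]) (use g(3) in auto)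
    moreover have "(\<lambda>z. g (psi z)) = f"
      using g(2) by (auto simp: K_def phi_psi fun_eq_iff)
    moreover have "integral\<^sup>L \<nu> f = integral\<^sup>L M g"
    proof -
      have fm: "f \<in> borel_measurable borel" by (rule borel_measurable_continuous_onI[OF f])
      have "integral\<^sup>L \<nu> f = integral\<^sup>L M (\<lambda>t. f (phi t))"
        unfolding \<nu>_def by (rule integral_distr[OF phi_M fm])
      also have "\<dots> = integral\<^sup>L M g"
      proof (rule integral_cong_AE)
        show "(\<lambda>t. f (phi t)) \<in> borel_measurable M" using measurable_compose[OF phi_M fm] .
        show "g \<in> borel_measurable M" using borel_measurable_continuous_onI[OF g(1)] by simp
        show "AE t in M. f (phi t) = g t" using AE_K by (rule AE_mp) (auto simp: g(2))
      qed
      finally show ?thesis .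
    qed
    ultimately show ?thesis by simp
  qed
  have shift_int: "integral\<^sup>L \<nu> (\<lambda>z. f (shift z)) = integral\<^sup>L \<nu> f"
    if f: "continuous_on UNIV f" for f :: "(nat \<Rightarrow> bool) \<Rightarrow> real"
  proof -
    have fs: "continuous_on UNIV (\<lambda>z. f (shift z))"
      by (rule continuous_on_compose2[OF f continuous_shift]) auto
    have l1: "(\<lambda>k. empirical_avg y (r0 (r' k)) (\<lambda>z. f (shift z)) - empirical_avg y (r0 (r' k)) f) \<longlonglongrightarrow> 0"
      using LIMSEQ_subseq_LIMSEQ[OF emp_shift_tendsto[OF f, of y] strict_mono_o[OF r0 r']]
      by (simp add: o_def)
    have l2: "(\<lambda>k. empirical_avg y (r0 (r' k)) (\<lambda>z. f (shift z)) - empirical_avg y (r0 (r' k)) f)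
        \<longlonglongrightarrow> integral\<^sup>L \<nu> (\<lambda>z. f (shift z)) - integral\<^sup>L \<nu> f"
      by (intro tendsto_diff lim f fs)
    have "integral\<^sup>L \<nu> (\<lambda>z. f (shift z)) - integral\<^sup>L \<nu> f = 0" by (rule LIMSEQ_unique[OF l2 l1])
    then show ?thesis by simp
  qed
  have shift_meas: "shift \<in> measurable \<nu> \<nu>"
    using borel_measurable_continuous_onI[OF continuous_shift] by (simp add: measurable_cong_sets[OF sets_nu sets_nu])
  have distr_eq: "distr \<nu> \<nu> shift = \<nu>"
  proof (rule measure_eqI_PiM_infinite[where I=UNIV and M="\<lambda>_. borel"])
    show "sets (distr \<nu> \<nu> shift) = sets (Pi\<^sub>M UNIV (\<lambda>_. borel))"
      using sets_PiM_bool sets_nu by simp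
    show "sets \<nu> = sets (Pi\<^sub>M UNIV (\<lambda>_. borel))"
      using sets_PiM_bool sets_nu by simp
    show "finite_measure (distr \<nu> \<nu> shift)"
      by (rule prob_space.finite_measure[OF nu.prob_space_distr[OF shift_meas]])
  next
    fix A :: "nat \<Rightarrow> bool set" and J :: "nat set"
    assume J: "finite J" "J \<subseteq> UNIV" "\<And>i. i \<in> J \<Longrightarrow> A i \<in> sets borel"
    define Z where "Z = prod_emb UNIV (\<lambda>_. borel) J (Pi\<^sub>E J A)"
    have Zeq: "Z = {x. \<forall>i\<in>J. x i \<in> A i}"
      unfolding Z_def prod_emb_def by (auto simp: space_PiM PiE_iff)
    have Zsets: "Z \<in> sets \<nu>"
    proof -
      have "prod_emb UNIV (\<lambda>_. borel) J (Pi\<^sub>E J A) \<in> sets (Pi\<^sub>M UNIV (\<lambda>_::nat. borel :: bool measure))"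
        by (rule sets_PiM_I) (use J in auto)
      then show ?thesis using sets_PiM_bool sets_nu by (simp add: Z_def)
    qed
    define n where "n = Suc (Max (insert 0 J))"
    have Jn: "i \<in> J \<Longrightarrow> i < n" for i unfolding n_def using J(1) by (simp add: le_imp_less_Suc)
    have ic: "continuous_on UNIV (indicator Z :: (nat \<Rightarrow> bool) \<Rightarrow> real)"
    proof (rule finite_dep_continuous[of n])
      fix x x' :: "nat \<Rightarrow> bool" assume "\<forall>i<n. x i = x' i"
      then have "x \<in> Z \<longleftrightarrow> x' \<in> Z" unfolding Zeq using Jn by auto
      then show "indicator Z x = (indicator Z x' :: real)" by (simp add: indicator_def)
    qed
    have "emeasure (distr \<nu> \<nu> shift) Z = emeasure \<nu> (shift -` Z)"
      using emeasure_distr[OF shift_meas Zsets] space_nu by simp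
    also have "\<dots> = ennreal (integral\<^sup>L \<nu> (\<lambda>z. indicator Z (shift z)))"
    proof -
      have "(\<lambda>z. indicator Z (shift z) :: real) = indicator (shift -` Z)"
        by (rule ext) (simp add: indicator_def)
      then show ?thesis by (simp only: nu.emeasure_eq_measure Bochner_Integration.integral_indicator space_nu Int_UNIV_right)
    qed
    also have "integral\<^sup>L \<nu> (\<lambda>z. indicator Z (shift z) :: real) = integral\<^sup>L \<nu> (indicator Z)"
      by (rule shift_int[OF ic])
    also have "ennreal (integral\<^sup>L \<nu> (indicator Z)) = emeasure \<nu> Z"
      by (simp only: nu.emeasure_eq_measure Bochner_Integration.integral_indicator space_nu Int_UNIV_right)
    finally show "emeasure (distr \<nu> \<nu> shift) (prod_emb UNIV (\<lambda>_. borel) J (Pi\<^sub>E J A)) =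
        emeasure \<nu> (prod_emb UNIV (\<lambda>_. borel) J (Pi\<^sub>E J A))" unfolding Z_def .
  qed
  have "quasi_generated y \<nu>"
    unfolding quasi_generated_def
  proof (intro conjI ballI)
    show "prob_space \<nu>" by (rule nu.prob_space_axioms)
    show "sets \<nu> = sets borel" by (rule sets_nu)
  next
    fix A assume A: "A \<in> sets \<nu>"
    show "emeasure \<nu> (shift -` A \<inter> space \<nu>) = emeasure \<nu> A"
      using emeasure_distr[OF shift_meas A] distr_eq by simp
  next
    show "\<exists>r. strict_mono r \<and> (\<forall>f::(nat \<Rightarrow> bool) \<Rightarrow> real. continuous_on UNIV f \<longrightarrow>
          (\<lambda>k. empirical_avg y (r k) f) \<longlonglongrightarrow> integral\<^sup>L \<nu> f)"
      using lim strict_mono_o[OF r0 r'] by (intro exI[of _ "r0 \<circ> r'"]) (auto simp: o_def)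
  qed
  then show ?thesis using r' lim by blast
qed

definition nc :: "(nat \<Rightarrow> bool) \<Rightarrow> nat \<Rightarrow> nat \<Rightarrow> bool" where
  "nc y L i \<longleftrightarrow> (\<exists>j<L. y (i + j) \<noteq> y i)"

definition PP :: "nat set \<Rightarrow> bool" where
  "PP B \<longleftrightarrow> (\<forall>M. \<exists>N. \<forall>x\<in>B. N \<le> x \<longrightarrow> (\<exists>a b. a \<le> x \<and> x < b \<and> {a..<b} \<subseteq> B \<and> M \<le> b - a))"

lemma PP_imp_uli:
  assumes inf: "infinite B" and P: "PP B"
  shows "union_long_intervals B"
proof -
  define e where "e = enumerate B"
  have eB: "e k \<in> B" for k unfolding e_def by (rule enumerate_in_set[OF inf])
  have em: "strict_mono e" unfolding e_def by (rule strict_mono_enumerate[OF inf])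
  have ege: "k \<le> e k" for k using seq_suble[OF em] .
  have re: "range e = B" unfolding e_def by (rule range_enumerate[OF inf])
  define ok where "ok k M \<longleftrightarrow> (\<exists>a b. a \<le> e k \<and> e k < b \<and> {a..<b} \<subseteq> B \<and> M \<le> b - a)" for k M
  define m where "m k = Max {M. M \<le> k \<and> ok k M}" for k
  have fin: "finite {M. M \<le> k \<and> ok k M}" for k by simp
  have ok0: "ok k 0" for k unfolding ok_def by (rule exI[of _ "e k"], rule exI[of _ "Suc (e k)"]) (use eB[of k] in auto)
  have okm: "ok k (m k)" for k
  proof -
    have "m k \<in> {M. M \<le> k \<and> ok k M}" unfolding m_def
      by (rule Max_in[OF fin]) (use ok0 in auto)
    then show ?thesis by simp
  qed
  have mge: "M \<le> m k" if "M \<le> k" "ok k M" for k M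
    unfolding m_def by (rule Max_ge[OF fin]) (use that in auto)
  obtain a b where ab: "\<And>k. a k \<le> e k \<and> e k < b k \<and> {a k..<b k} \<subseteq> B \<and> m k \<le> b k - a k"
    using okm unfolding ok_def by metis
  show ?thesis
    unfolding union_long_intervals_def
  proof (rule exI[of _ a], rule exI[of _ b], intro conjI)
    show "B = (\<Union>k. {a k..<b k})"
    proof (rule equalityI)
      show "B \<subseteq> (\<Union>k. {a k..<b k})"
      proof
        fix x assume "x \<in> B"
        then obtain k where "x = e k" using re by auto
        then show "x \<in> (\<Union>k. {a k..<b k})" using ab[of k] by auto
      qed
      show "(\<Union>k. {a k..<b k}) \<subseteq> B" using ab by blast
    qed
    show "filterlim (\<lambda>k. b k - a k) at_top sequentially"
      unfolding filterlim_at_top eventually_sequentially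
    proof
      fix M
      obtain N where N: "\<forall>x\<in>B. N \<le> x \<longrightarrow> (\<exists>a b. a \<le> x \<and> x < b \<and> {a..<b} \<subseteq> B \<and> M \<le> b - a)"
        using P unfolding PP_def by blast
      show "\<exists>K. \<forall>k\<ge>K. M \<le> b k - a k"
      proof (intro exI[of _ "max M N"] allI impI)
        fix k assume k: "max M N \<le> k"
        then have "N \<le> e k" using ege[of k] by simp
        then have "ok k M" using N eB[of k] unfolding ok_def by blast
        then have "M \<le> m k" using mge k by simp
        then show "M \<le> b k - a k" using ab[of k] by simp
      qed
    qed
  qed
qed

lemma uli_imp_PP:
  assumes "union_long_intervals B"
  shows "PP B"
proof -
  obtain a b where B: "B = (\<Union>k. {a k..<b k})" and lim: "filterlim (\<lambda>k. b k - a k) at_top sequentially"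
    using assms unfolding union_long_intervals_def by blast
  show ?thesis unfolding PP_def
  proof
    fix M
    obtain K where K: "\<And>k. K \<le> k \<Longrightarrow> M \<le> b k - a k"
      using lim unfolding filterlim_at_top eventually_sequentially by blast
    define N where "N = Max (insert 0 (b ` {..<K}))"
    have bN: "k < K \<Longrightarrow> b k \<le> N" for k unfolding N_def by (intro Max_ge) auto
    show "\<exists>N. \<forall>x\<in>B. N \<le> x \<longrightarrow> (\<exists>a b. a \<le> x \<and> x < b \<and> {a..<b} \<subseteq> B \<and> M \<le> b - a)"
    proof (rule exI[of _ N], intro ballI impI)
      fix x assume "x \<in> B" "N \<le> x"
      then obtain k where k: "a k \<le> x" "x < b k" using B by auto
      have "K \<le> k"
      proof (rule ccontr)
        assume "\<not> K \<le> k" then have "b k \<le> N" using bN by simp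
        then show False using k \<open>N \<le> x\<close> by simp
      qed
      then have "M \<le> b k - a k" using K by blast
      moreover have "{a k..<b k} \<subseteq> B" using B by blast
      ultimately show "\<exists>a' b'. a' \<le> x \<and> x < b' \<and> {a'..<b'} \<subseteq> B \<and> M \<le> b' - a'"
        using k by blast
    qed
  qed
qed

lemma PP_empty: "PP {}" unfolding PP_def by simp

lemma density_zero_Un:
  assumes "density_zero A" "density_zero D"
  shows "density_zero (A \<union> D)"
proof -
  have le: "real (card ((A \<union> D) \<inter> {..<n})) / real n \<le> real (card (A \<inter> {..<n})) / real n + real (card (D \<inter> {..<n})) / real n" for n
  proof -
    have "card ((A \<union> D) \<inter> {..<n}) \<le> card (A \<inter> {..<n}) + card (D \<inter> {..<n})"
      by (metis Int_Un_distrib2 card_Un_le)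
    then show ?thesis by (simp add: add_divide_distrib[symmetric] divide_right_mono)
  qed
  have "(\<lambda>n. real (card (A \<inter> {..<n})) / real n + real (card (D \<inter> {..<n})) / real n) \<longlonglongrightarrow> 0 + 0"
    using assms unfolding density_zero_def by (rule tendsto_add)
  show ?thesis unfolding density_zero_def
  proof (rule Lim_null_comparison)
    show "(\<lambda>n. real (card (A \<inter> {..<n})) / real n + real (card (D \<inter> {..<n})) / real n) \<longlonglongrightarrow> 0"
      using \<open>_ \<longlonglongrightarrow> 0 + 0\<close> by simp
    show "\<forall>\<^sub>F n in sequentially. norm (real (card ((A \<union> D) \<inter> {..<n})) / real n) \<le> real (card (A \<inter> {..<n})) / real n + real (card (D \<inter> {..<n})) / real n"
      using le by (intro always_eventually allI) simp
  qed
qed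

lemma density_zero_finite: "finite F \<Longrightarrow> density_zero F"
proof -
  assume F: "finite F"
  have "(\<lambda>n. real (card F) * (1 / real n)) \<longlonglongrightarrow> real (card F) * 0"
    by (intro tendsto_mult tendsto_const lim_1_over_n)
  then have lim: "(\<lambda>n. real (card F) / real n) \<longlonglongrightarrow> 0" by simp
  show ?thesis unfolding density_zero_def
  proof (rule Lim_null_comparison[OF _ lim], intro always_eventually allI)
    fix n
    have "card (F \<inter> {..<n}) \<le> card F" by (rule card_mono[OF F]) auto
    then show "norm (real (card (F \<inter> {..<n})) / real n) \<le> real (card F) / real n"
      by (simp add: divide_right_mono)
  qed
qed

lemma nc_mono: "L \<le> L' \<Longrightarrow> nc y L i \<Longrightarrow> nc y L' i"
  unfolding nc_def by (meson less_le_trans)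

lemma comb1:
  fixes y :: "nat \<Rightarrow> bool"
  assumes H: "\<And>L. (\<lambda>n. real (card {i. i < n \<and> nc y L i}) / real n) \<longlonglongrightarrow> 0"
  shows "\<exists>A0. density_zero A0 \<and> (\<forall>v. PP (-A0 \<inter> {i. y i = v}))"
proof -
  have "\<exists>T. \<forall>n\<ge>T. L * card {i. i < n \<and> nc y L i} \<le> n" for L
  proof (cases "L = 0")
    case True then show ?thesis by simp
  next
    case False
    then have Lpos: "real L > 0" by simp
    have "\<forall>\<^sub>F n in sequentially. real (card {i. i < n \<and> nc y L i}) / real n < 1 / real L"
      by (rule order_tendstoD(2)[OF H]) (use Lpos in simp)
    then obtain N where N: "\<And>n. n \<ge> N \<Longrightarrow> real (card {i. i < n \<and> nc y L i}) / real n < 1 / real L"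
      unfolding eventually_sequentially by blast
    show ?thesis
    proof (rule exI[of _ "max 1 N"], intro allI impI)
      fix n assume n: "max 1 N \<le> n"
      then have npos: "real n > 0" by simp
      have "real (card {i. i < n \<and> nc y L i}) / real n < 1 / real L" using N n by simp
      then have "real (card {i. i < n \<and> nc y L i}) * real L < real n"
        using npos Lpos by (simp add: field_simps)
      then have "card {i. i < n \<and> nc y L i} * L < n" by (simp flip: of_nat_mult)
      then show "L * card {i. i < n \<and> nc y L i} \<le> n" by (simp add: mult.commute)
    qed
  qed
  then obtain T where T: "\<And>L n. T L \<le> n \<Longrightarrow> L * card {i. i < n \<and> nc y L i} \<le> n"
    by metis
  define l where "l n = Max (insert 1 {L. L \<le> n \<and> T L \<le> n})" for n
  have finl: "finite (insert 1 {L. L \<le> n \<and> T L \<le> n})" for n by simp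
  have l1: "1 \<le> l n" for n unfolding l_def by (rule Max_ge[OF finl]) simp
  have l2: "l m \<le> l n" if "m \<le> n" for m n
    unfolding l_def by (rule Max_mono[OF _ _ finl]) (use that in auto)
  have l3: "M \<le> l n" if "M \<le> n" "T M \<le> n" for M n
    unfolding l_def by (rule Max_ge[OF finl]) (use that in auto)
  have l4: "l n \<le> max 1 n" for n
    unfolding l_def by (rule Max.boundedI[OF finl]) auto
  have l5: "l n * card {i. i < n \<and> nc y (l n) i} \<le> n" for n
  proof -
    have "l n \<in> insert 1 {L. L \<le> n \<and> T L \<le> n}" unfolding l_def by (rule Max_in[OF finl]) simp
    then consider "l n = 1" | "T (l n) \<le> n" by auto
    then show ?thesis
    proof cases
      case 1
      have "card {i. i < n \<and> nc y (l n) i} \<le> card {..<n}" by (rule card_mono) auto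
      then show ?thesis using 1 by simp
    next
      case 2 then show ?thesis by (rule T)
    qed
  qed
  have llim: "filterlim l at_top sequentially"
    unfolding filterlim_at_top eventually_sequentially
    by (intro allI, rule_tac x="max Z (T Z)" in exI) (auto intro: l3)
  define A0 where "A0 = {i. \<forall>j\<le>i. i < j + l j \<longrightarrow> nc y (l j) j}"
  have dens: "density_zero A0"
  proof -
    have bnd: "real (card (A0 \<inter> {..<n})) / real n \<le> 1 / real (l n)" for n
    proof -
      have sub: "A0 \<inter> {..<n} \<subseteq> {i. i < n \<and> nc y (l n) i}"
      proof
        fix i assume i: "i \<in> A0 \<inter> {..<n}"
        then have "nc y (l i) i" unfolding A0_def using l1[of i] by auto
        moreover have "l i \<le> l n" using i l2 by simp
        ultimately show "i \<in> {i. i < n \<and> nc y (l n) i}" using i nc_mono by blast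
      qed
      have "card (A0 \<inter> {..<n}) \<le> card {i. i < n \<and> nc y (l n) i}" by (rule card_mono[OF _ sub]) simp
      then have "l n * card (A0 \<inter> {..<n}) \<le> n" using l5[of n] by (meson le_trans mult_le_mono2)
      then have *: "real (l n) * real (card (A0 \<inter> {..<n})) \<le> real n" by (simp flip: of_nat_mult)
      have lpos: "real (l n) > 0" using l1[of n] by simp
      show ?thesis
      proof (cases "n = 0")
        case True then show ?thesis by simp
      next
        case False
        then show ?thesis using * lpos by (simp add: field_simps)
      qed
    qed
    have "filterlim (\<lambda>n. real (l n)) at_top sequentially"
      by (rule filterlim_compose[OF filterlim_real_sequentially llim])
    then have "(\<lambda>n. inverse (real (l n))) \<longlonglongrightarrow> 0" by (rule tendsto_inverse_0_at_top)
    then have lim: "(\<lambda>n. 1 / real (l n)) \<longlonglongrightarrow> 0" by (simp add: inverse_eq_divide)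
    show ?thesis unfolding density_zero_def
      by (rule Lim_null_comparison[OF _ lim]) (use bnd in \<open>auto intro!: always_eventually\<close>)
  qed
  have PPv: "PP (-A0 \<inter> {i. y i = v})" for v
    unfolding PP_def
  proof
    fix M
    define J where "J = max M (T M)"
    show "\<exists>N. \<forall>x\<in>-A0 \<inter> {i. y i = v}. N \<le> x \<longrightarrow> (\<exists>a b. a \<le> x \<and> x < b \<and> {a..<b} \<subseteq> -A0 \<inter> {i. y i = v} \<and> M \<le> b - a)"
    proof (rule exI[of _ "2 * J + 1"], intro ballI impI)
      fix x assume x: "x \<in> -A0 \<inter> {i. y i = v}" and xN: "2 * J + 1 \<le> x"
      then obtain j where j: "j \<le> x" "x < j + l j" "\<not> nc y (l j) j" unfolding A0_def by auto
      have const: "y z = y j" if "j \<le> z" "z < j + l j" for z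
        using j(3) that unfolding nc_def by (metis add_diff_inverse_nat add_less_cancel_left not_le)
      have "J \<le> j"
      proof (rule ccontr)
        assume "\<not> J \<le> j"
        then have "l j \<le> max 1 J" using l4[of j] by simp
        then show False using j(2) xN \<open>\<not> J \<le> j\<close> by simp
      qed
      then have "M \<le> l j" using l3[of M j] unfolding J_def by simp
      moreover have "{j..<j + l j} \<subseteq> -A0 \<inter> {i. y i = v}"
      proof
        fix z assume z: "z \<in> {j..<j + l j}"
        then have "z \<notin> A0" unfolding A0_def using j(3) by auto
        moreover have "y z = v" using const[of z] const[of x] z j x by auto
        ultimately show "z \<in> -A0 \<inter> {i. y i = v}" by simp
      qed
      ultimately show "\<exists>a b. a \<le> x \<and> x < b \<and> {a..<b} \<subseteq> -A0 \<inter> {i. y i = v} \<and> M \<le> b - a"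
        using j by (intro exI[of _ j] exI[of _ "j + l j"]) auto
    qed
  qed
  show ?thesis using dens PPv by blast
qed

lemma spaced_card:
  fixes X :: "nat set"
  assumes M: "M \<ge> 1" and sp: "\<And>e e'. e \<in> X \<Longrightarrow> e' \<in> X \<Longrightarrow> e < e' \<Longrightarrow> e + M \<le> e'"
  shows "M * card (X \<inter> {..<n}) \<le> n + M"
proof (induction n rule: less_induct)
  case (less n)
  show ?case
  proof (cases n)
    case 0 then show ?thesis by simp
  next
    case (Suc m)
    show ?thesis
    proof (cases "m \<in> X")
      case False
      then have "X \<inter> {..<n} = X \<inter> {..<m}" using Suc by (auto simp: less_Suc_eq)
      then show ?thesis using less.IH[of m] Suc by simp
    next
      case True
      have sub: "X \<inter> {..<n} \<subseteq> insert m (X \<inter> {..<n - M})"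
      proof
        fix e assume e: "e \<in> X \<inter> {..<n}"
        show "e \<in> insert m (X \<inter> {..<n - M})"
        proof (cases "e = m")
          case False
          then have "e < m" using e Suc by auto
          then have "e + M \<le> m" using sp[of e m] e True by auto
          then show ?thesis using e Suc by auto
        qed simp
      qed
      have "card (X \<inter> {..<n}) \<le> card (insert m (X \<inter> {..<n - M}))" by (rule card_mono[OF _ sub]) simp
      also have "\<dots> \<le> Suc (card (X \<inter> {..<n - M}))" by (rule card_insert_le_m1) auto
      finally have c: "card (X \<inter> {..<n}) \<le> Suc (card (X \<inter> {..<n - M}))" .
      have "M * card (X \<inter> {..<n - M}) \<le> n"
      proof (cases "M \<le> n")
        case True
        have "M * card (X \<inter> {..<n - M}) \<le> n - M + M" using less.IH[of "n - M"] M Suc by simp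
        then show ?thesis using True by simp
      next
        case False then show ?thesis by simp
      qed
      then have "M * Suc (card (X \<inter> {..<n - M})) \<le> n + M" by simp
      moreover have "M * card (X \<inter> {..<n}) \<le> M * Suc (card (X \<inter> {..<n - M}))" by (rule mult_le_mono2[OF c])
      ultimately show ?thesis by linarith
    qed
  qed
qed

lemma edge_run:
  assumes N: "\<forall>x\<in>V. N \<le> x \<longrightarrow> (\<exists>a b. a \<le> x \<and> x < b \<and> {a..<b} \<subseteq> V \<and> M \<le> b - a)"
    and e: "e \<notin> V" "Suc e \<in> V" "N \<le> Suc e" and e': "e < e'" "e' < e + M"
  shows "e' \<in> V \<and> Suc e' \<in> V"
proof -
  obtain a b where ab: "a \<le> Suc e" "Suc e < b" "{a..<b} \<subseteq> V" "M \<le> b - a" using N e by blast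
  have "\<not> a \<le> e"
  proof
    assume "a \<le> e" then have "e \<in> {a..<b}" using ab(2) by auto
    then have "e \<in> V" using ab(3) by blast
    then show False using e(1) by blast
  qed
  then have "a = Suc e" using ab by simp
  then have "e' \<in> {a..<b}" "Suc e' \<in> {a..<b}" using ab e' by auto
  then show ?thesis using ab by auto
qed

lemma density_edges:
  fixes B C :: "nat set"
  assumes BC: "B \<inter> C = {}" and PB: "PP B" and PC: "PP C"
  shows "density_zero {j. (j \<in> B \<and> Suc j \<in> C) \<or> (j \<in> C \<and> Suc j \<in> B)}"
proof -
  define E where "E = {j. (j \<in> B \<and> Suc j \<in> C) \<or> (j \<in> C \<and> Suc j \<in> B)}"
  have main: "\<forall>\<^sub>F n in sequentially. real (card (E \<inter> {..<n})) / real n < \<epsilon>" if eps: "\<epsilon> > 0" for \<epsilon> :: real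
  proof -
    define M :: nat where "M = nat \<lceil>2 / \<epsilon>\<rceil> + 1"
    have M1: "M \<ge> 1" unfolding M_def by simp
    have "real M > 2 / \<epsilon>" unfolding M_def by linarith
    then have Meps: "1 / real M < \<epsilon> / 2" using eps M1 by (simp add: field_simps)
    obtain NB where NB: "\<forall>x\<in>B. NB \<le> x \<longrightarrow> (\<exists>a b. a \<le> x \<and> x < b \<and> {a..<b} \<subseteq> B \<and> M \<le> b - a)"
      using PB unfolding PP_def by blast
    obtain NC where NC: "\<forall>x\<in>C. NC \<le> x \<longrightarrow> (\<exists>a b. a \<le> x \<and> x < b \<and> {a..<b} \<subseteq> C \<and> M \<le> b - a)"
      using PC unfolding PP_def by blast
    define N where "N = max NB NC"
    define X where "X = E \<inter> {N..}"
    have sp: "e + M \<le> e'" if e: "e \<in> X" "e' \<in> X" "e < e'" for e e'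
    proof (rule ccontr)
      assume "\<not> e + M \<le> e'"
      then have lt: "e' < e + M" by simp
      from e(1) consider "e \<in> B" "Suc e \<in> C" | "e \<in> C" "Suc e \<in> B" "N \<le> e" unfolding X_def E_def by auto
      then show False
      proof cases
        case 1
        have "e \<notin> C" using 1 BC by auto
        then have "e' \<in> C \<and> Suc e' \<in> C"
          using edge_run[OF NC _ 1(2) _ e(3) lt] e(1) unfolding X_def N_def by auto
        then show False using e(2) BC unfolding X_def E_def by auto
      next
        case 2
        have "e \<notin> B" using 2 BC by auto
        then have "e' \<in> B \<and> Suc e' \<in> B"
          using edge_run[OF NB _ 2(2) _ e(3) lt] 2(3) unfolding N_def by auto
        then show False using e(2) BC unfolding X_def E_def by auto
      qed
    qed
    have cX: "M * card (X \<inter> {..<n}) \<le> n + M" for n by (rule spaced_card[OF M1 sp])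
    have cE: "card (E \<inter> {..<n}) \<le> card (X \<inter> {..<n}) + N" for n
    proof -
      have "E \<inter> {..<n} \<subseteq> (X \<inter> {..<n}) \<union> {..<N}" unfolding X_def by auto
      then have "card (E \<inter> {..<n}) \<le> card ((X \<inter> {..<n}) \<union> {..<N})" by (rule card_mono[rotated]) simp
      also have "\<dots> \<le> card (X \<inter> {..<n}) + card {..<N}" by (rule card_Un_le)
      finally show ?thesis by simp
    qed
    have bnd: "real (card (E \<inter> {..<n})) / real n \<le> 1 / real M + real (N + 1) / real n" if n: "n > 0" for n
    proof -
      have "real M * real (card (E \<inter> {..<n})) \<le> real M * (real (card (X \<inter> {..<n})) + real N)"
        using cE[of n] by (intro mult_left_mono) auto
      also have "\<dots> \<le> real n + real M + real M * real N"
        using cX[of n] by (simp add: distrib_left flip: of_nat_mult of_nat_add)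
      finally have "real M * real (card (E \<inter> {..<n})) \<le> real n + real M * real (N + 1)"
        by (simp add: distrib_left)
      then show ?thesis using n M1 by (simp add: field_simps)
    qed
    have "(\<lambda>n. real (N + 1) * (1 / real n)) \<longlonglongrightarrow> real (N + 1) * 0"
      by (intro tendsto_mult tendsto_const lim_1_over_n)
    then have "(\<lambda>n. real (N + 1) / real n) \<longlonglongrightarrow> 0" by simp
    then have ev: "\<forall>\<^sub>F n in sequentially. real (N + 1) / real n < \<epsilon> / 2"
      by (rule order_tendstoD(2)) (use eps in simp)
    have ev2: "\<forall>\<^sub>F n in sequentially. n > (0::nat)" by (rule eventually_gt_at_top)
    show ?thesis
      using ev ev2
    proof eventually_elim
      case (elim n)
      then show ?case using bnd[of n] Meps by linarith
    qed
  qed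
  have "(\<lambda>n. real (card (E \<inter> {..<n})) / real n) \<longlonglongrightarrow> 0"
  proof (rule order_tendstoI)
    fix a :: real assume "a < 0"
    then show "\<forall>\<^sub>F n in sequentially. a < real (card (E \<inter> {..<n})) / real n"
      by (intro always_eventually allI) (auto intro: less_le_trans[of a 0])
  next
    fix a :: real assume "0 < a" then show "\<forall>\<^sub>F n in sequentially. real (card (E \<inter> {..<n})) / real n < a"
      by (rule main)
  qed
  then show ?thesis unfolding density_zero_def E_def .
qed

lemma first_change:
  fixes y :: "nat \<Rightarrow> bool"
  shows "y (i + t) \<noteq> y i \<Longrightarrow> \<exists>s<t. y (i + s) \<noteq> y (i + Suc s)"
proof (induction t)
  case 0 then show ?case by simp
next
  case (Suc t)
  show ?case
  proof (cases "y (i + t) = y i")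
    case True
    then have "y (i + t) \<noteq> y (i + Suc t)" using Suc.prems by simp
    then show ?thesis by blast
  next
    case False
    then obtain s where "s < t" "y (i + s) \<noteq> y (i + Suc s)" using Suc.IH by blast
    then show ?thesis by (intro exI[of _ s]) simp
  qed
qed

lemma comb2:
  fixes S A B C :: "nat set"
  assumes part: "A \<union> B \<union> C = UNIV" and BC: "B \<inter> C = {}" and dA: "density_zero A"
    and PB: "PP B" and PC: "PP C" and BS: "B \<subseteq> S" and CS: "C \<inter> S = {}"
  shows "(\<lambda>n. real (card {i. i < n \<and> nc (\<lambda>i. i \<in> S) L i}) / real n) \<longlonglongrightarrow> 0"
proof -
  define y where "y = (\<lambda>i. i \<in> S)"
  define E where "E = {j. (j \<in> B \<and> Suc j \<in> C) \<or> (j \<in> C \<and> Suc j \<in> B)}"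
  define D where "D = A \<union> E"
  have dD: "density_zero D" unfolding D_def E_def
    by (rule density_zero_Un[OF dA density_edges[OF BC PB PC]])
  have ncD: "\<exists>t<L. i + t \<in> D" if ncy: "nc y L i" for i
  proof -
    obtain t where t: "t < L" "y (i + t) \<noteq> y i" using ncy unfolding nc_def by blast
    obtain s where s: "s < t" "y (i + s) \<noteq> y (i + Suc s)" using first_change[OF t(2)] by blast
    show ?thesis
    proof (cases "i + s \<in> A \<or> i + Suc s \<in> A")
      case True
      then show ?thesis
      proof
        assume "i + s \<in> A" then show ?thesis unfolding D_def using s t by (intro exI[of _ s]) auto
      next
        assume "i + Suc s \<in> A" then show ?thesis unfolding D_def using s t by (intro exI[of _ "Suc s"]) auto
      qed
    next
      case False
      then have "i + s \<in> B \<union> C" "i + Suc s \<in> B \<union> C" using part by auto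
      then have "i + s \<in> E" using s(2) BS CS BC unfolding E_def y_def by auto
      then show ?thesis unfolding D_def using s t by (intro exI[of _ s]) auto
    qed
  qed
  have cnt: "card {i. i < n \<and> nc y L i} \<le> L * (card (D \<inter> {..<n}) + L)" for n
  proof -
    have "{i. i < n \<and> nc y L i} \<subseteq> (\<Union>t<L. {i. i < n \<and> i + t \<in> D})" using ncD by blast
    then have "card {i. i < n \<and> nc y L i} \<le> card (\<Union>t<L. {i. i < n \<and> i + t \<in> D})"
      by (rule card_mono[rotated]) simp
    also have "\<dots> \<le> (\<Sum>t<L. card {i. i < n \<and> i + t \<in> D})" by (rule card_UN_le) simp
    also have "\<dots> \<le> (\<Sum>t<L. card (D \<inter> {..<n}) + L)"
    proof (rule sum_mono)
      fix t assume t: "t \<in> {..<L}"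
      have "card {i. i < n \<and> i + t \<in> D} = card ((\<lambda>i. i + t) ` {i. i < n \<and> i + t \<in> D})"
        by (rule card_image[symmetric]) (simp add: inj_on_def)
      also have "\<dots> \<le> card ((D \<inter> {..<n}) \<union> {n..<n + L})"
        by (rule card_mono) (use t in auto)
      also have "\<dots> \<le> card (D \<inter> {..<n}) + card {n..<n + L}" by (rule card_Un_le)
      finally show "card {i. i < n \<and> i + t \<in> D} \<le> card (D \<inter> {..<n}) + L" by simp
    qed
    also have "\<dots> = L * (card (D \<inter> {..<n}) + L)" by simp
    finally show ?thesis .
  qed
  have bnd: "real (card {i. i < n \<and> nc y L i}) / real n \<le>
      real L * (real (card (D \<inter> {..<n})) / real n) + real (L * L) * (1 / real n)" for n
  proof -
    have "real (card {i. i < n \<and> nc y L i}) \<le> real L * real (card (D \<inter> {..<n})) + real (L * L)"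
      using cnt[of n] by (simp add: distrib_left flip: of_nat_mult of_nat_add)
    then have "real (card {i. i < n \<and> nc y L i}) / real n \<le> (real L * real (card (D \<inter> {..<n})) + real (L * L)) / real n"
      by (rule divide_right_mono) simp
    then show ?thesis by (simp add: add_divide_distrib)
  qed
  have "(\<lambda>n. real L * (real (card (D \<inter> {..<n})) / real n) + real (L * L) * (1 / real n)) \<longlonglongrightarrow> real L * 0 + real (L * L) * 0"
    using dD unfolding density_zero_def by (intro tendsto_add tendsto_mult tendsto_const lim_1_over_n)
  then have lim: "(\<lambda>n. real L * (real (card (D \<inter> {..<n})) / real n) + real (L * L) * (1 / real n)) \<longlonglongrightarrow> 0" by simp
  show ?thesis unfolding y_def[symmetric]
    by (rule Lim_null_comparison[OF _ lim]) (use bnd in \<open>auto intro!: always_eventually\<close>)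
qed

lemma fd_sets:
  fixes X :: "(nat \<Rightarrow> bool) set"
  assumes "\<And>x x'. (\<forall>i<n. x i = x' i) \<Longrightarrow> (x \<in> X \<longleftrightarrow> x' \<in> X)"
  shows "X \<in> sets borel"
proof -
  have c: "continuous_on UNIV (indicator X :: (nat \<Rightarrow> bool) \<Rightarrow> real)"
  proof (rule finite_dep_continuous[of n])
    fix x x' :: "nat \<Rightarrow> bool" assume "\<forall>i<n. x i = x' i"
    then have "x \<in> X \<longleftrightarrow> x' \<in> X" by (rule assms)
    then show "indicator X x = (indicator X x' :: real)" by (simp add: indicator_def)
  qed
  have o: "open ((indicator X :: (nat \<Rightarrow> bool) \<Rightarrow> real) -` {0<..} \<inter> UNIV)"
    using c continuous_on_open_vimage[OF open_UNIV] open_greaterThan by blast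
  have "(indicator X :: (nat \<Rightarrow> bool) \<Rightarrow> real) -` {0<..} \<inter> UNIV = X"
    by (auto simp: indicator_def)
  then have "open X" using o by simp
  then show ?thesis by (rule borel_open)
qed

definition NC :: "nat \<Rightarrow> (nat \<Rightarrow> bool) set" where
  "NC L = {x. \<exists>j<L. x j \<noteq> x 0}"

lemma NC_eq:
  assumes "\<forall>i<L. x i = x' i"
  shows "x \<in> NC L \<longleftrightarrow> x' \<in> NC L"
proof -
  have h: "x j = x' j \<and> x 0 = x' 0" if "j < L" for j using assms that by auto
  show ?thesis unfolding NC_def using h by auto
qed

lemma NC_cont: "continuous_on UNIV (indicator (NC L) :: (nat \<Rightarrow> bool) \<Rightarrow> real)"
proof (rule finite_dep_continuous[of L])
  fix x x' :: "nat \<Rightarrow> bool" assume "\<forall>i<L. x i = x' i"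
  then have "x \<in> NC L \<longleftrightarrow> x' \<in> NC L" by (rule NC_eq)
  then show "indicator (NC L) x = (indicator (NC L) x' :: real)" by (simp add: indicator_def)
qed

lemma NC_sets: "NC L \<in> sets borel"
  by (rule fd_sets[of L]) (rule NC_eq)

lemma emp_NC: "empirical_avg y n (indicator (NC L)) = real (card {i. i < n \<and> nc y L i}) / real n"
proof -
  have "(\<Sum>i<n. indicator (NC L) ((shift ^^ i) y) :: real) = (\<Sum>i<n. indicator {i. nc y L i} i)"
    by (rule sum.cong) (auto simp: shift_pow NC_def nc_def indicator_def)
  also have "\<dots> = real (\<Sum>i<n. indicator {i. nc y L i} i :: nat)"
    by (simp add: of_nat_sum indicator_def)
  also have "(\<Sum>i<n. indicator {i. nc y L i} i :: nat) = card ({..<n} \<inter> {i. nc y L i})"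
    by (rule sum_indicator_eq_card) simp
  also have "{..<n} \<inter> {i. nc y L i} = {i. i < n \<and> nc y L i}" by auto
  finally show ?thesis unfolding empirical_avg_def by simp
qed

lemma sup_imp_H:
  fixes S :: "nat set"
  assumes sup: "superficial S"
  shows "(\<lambda>n. real (card {i. i < n \<and> nc (ind_seq S) L i}) / real n) \<longlonglongrightarrow> 0"
proof -
  define y where "y = ind_seq S"
  define a where "a n = real (card {i. i < n \<and> nc y L i}) / real n" for n
  have a0: "a n \<ge> 0" for n unfolding a_def by simp
  have "a \<longlonglongrightarrow> 0"
  proof (rule order_tendstoI)
    fix e :: real assume "e < 0"
    then show "\<forall>\<^sub>F n in sequentially. e < a n" using a0 by (intro always_eventually allI) (auto intro: less_le_trans)
  next
    fix e :: real assume e: "0 < e"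
    show "\<forall>\<^sub>F n in sequentially. a n < e"
    proof (rule ccontr)
      assume ne: "\<not> (\<forall>\<^sub>F n in sequentially. a n < e)"
      define I where "I = {n. e \<le> a n}"
      have infI: "infinite I"
      proof
        assume "finite I"
        then obtain k where "I \<subseteq> {..<k}" using finite_nat_bounded by blast
        then have "\<forall>n\<ge>k. a n < e" unfolding I_def by (auto simp: not_le[symmetric])
        then show False using ne unfolding eventually_sequentially by blast
      qed
      define r0 where "r0 = enumerate I"
      have r0: "strict_mono r0" unfolding r0_def by (rule strict_mono_enumerate[OF infI])
      have r0I: "e \<le> a (r0 k)" for k using enumerate_in_set[OF infI] unfolding r0_def I_def by auto
      obtain \<nu> r where r: "strict_mono r" and qg: "quasi_generated y \<nu>"
        and conv: "\<And>f. continuous_on UNIV f \<Longrightarrow> (\<lambda>k. empirical_avg y (r0 (r k)) f) \<longlonglongrightarrow> integral\<^sup>L \<nu> f"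
        using exists_qg[OF r0, of y] by blast
      have "in_conv_deltas \<nu>" using sup qg unfolding superficial_def quasi_generated_set_def y_def by auto
      then obtain p where sets: "sets \<nu> = sets borel" and
        p: "\<forall>A\<in>sets \<nu>. emeasure \<nu> A = ennreal (p * indicator A (\<lambda>_. False) + (1 - p) * indicator A (\<lambda>_. True))"
        unfolding in_conv_deltas_def by blast
      have "NC L \<in> sets \<nu>" using NC_sets[of L] sets by simp
      then have "emeasure \<nu> (NC L) = ennreal (p * indicator (NC L) (\<lambda>_. False) + (1 - p) * indicator (NC L) (\<lambda>_. True))"
        using p by blast
      moreover have "(\<lambda>_. False) \<notin> NC L" "(\<lambda>_. True) \<notin> NC L" by (auto simp: NC_def)
      ultimately have "emeasure \<nu> (NC L) = 0" by simp
      then have m0: "measure \<nu> (NC L) = 0" by (simp add: measure_def)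
      have sp: "space \<nu> = UNIV" using sets_eq_imp_space_eq[OF sets] by simp
      have "(\<lambda>k. a (r0 (r k))) \<longlonglongrightarrow> integral\<^sup>L \<nu> (indicator (NC L))"
        using conv[OF NC_cont[of L]] unfolding emp_NC a_def .
      then have "(\<lambda>k. a (r0 (r k))) \<longlonglongrightarrow> 0" using m0 sp by simp
      moreover have "\<forall>k\<ge>0. e \<le> a (r0 (r k))" using r0I by simp
      ultimately have "e \<le> 0" by (intro LIMSEQ_le_const) blast+
      then show False using e by simp
    qed
  qed
  then show ?thesis unfolding a_def y_def .
qed

lemma H_imp_conv:
  fixes y :: "nat \<Rightarrow> bool"
  assumes H: "\<And>L. (\<lambda>n. real (card {i. i < n \<and> nc y L i}) / real n) \<longlonglongrightarrow> 0"
    and qg: "quasi_generated y \<nu>"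
  shows "in_conv_deltas \<nu>"
proof -
  from qg obtain r where ps: "prob_space \<nu>" and sets: "sets \<nu> = sets borel" and r: "strict_mono r"
    and conv: "\<And>f. continuous_on UNIV f \<Longrightarrow> (\<lambda>k. empirical_avg y (r k) f) \<longlonglongrightarrow> integral\<^sup>L \<nu> f"
    unfolding quasi_generated_def by blast
  interpret prob_space \<nu> by (rule ps)
  have sp: "space \<nu> = UNIV" using sets_eq_imp_space_eq[OF sets] by simp
  have NCs: "NC L \<in> sets \<nu>" for L using NC_sets[of L] sets by simp
  have null: "NC L \<in> null_sets \<nu>" for L
  proof -
    have "(\<lambda>k. empirical_avg y (r k) (indicator (NC L))) \<longlonglongrightarrow> integral\<^sup>L \<nu> (indicator (NC L))"
      by (rule conv[OF NC_cont])
    moreover have "(\<lambda>k. empirical_avg y (r k) (indicator (NC L))) \<longlonglongrightarrow> 0"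
      unfolding emp_NC using LIMSEQ_subseq_LIMSEQ[OF H r] by (simp add: o_def)
    ultimately have "integral\<^sup>L \<nu> (indicator (NC L)) = (0::real)" by (rule LIMSEQ_unique)
    then have "measure \<nu> (NC L) = 0" using sp by simp
    then have "emeasure \<nu> (NC L) = 0" by (simp add: emeasure_eq_measure)
    then show ?thesis using NCs by (simp add: null_sets_def)
  qed
  define F :: "nat \<Rightarrow> bool" where "F = (\<lambda>_. False)"
  define T :: "nat \<Rightarrow> bool" where "T = (\<lambda>_. True)"
  define Z where "Z = {F, T}"
  have UNC: "(\<Union>L. NC L) = - Z"
  proof
    show "(\<Union>L. NC L) \<subseteq> - Z" unfolding Z_def F_def T_def NC_def by auto
    show "- Z \<subseteq> (\<Union>L. NC L)"
    proof
      fix x assume "x \<in> - Z"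
      then have "x \<noteq> F" "x \<noteq> T" unfolding Z_def by auto
      have "\<exists>j. x j \<noteq> x 0"
      proof (rule ccontr)
        assume "\<not> (\<exists>j. x j \<noteq> x 0)"
        then have "x = (\<lambda>_. x 0)" by auto
        then show False using \<open>x \<noteq> F\<close> \<open>x \<noteq> T\<close> unfolding F_def T_def by (cases "x 0") auto
      qed
      then obtain j where "x j \<noteq> x 0" by blast
      then have "x \<in> NC (Suc j)" unfolding NC_def by auto
      then show "x \<in> (\<Union>L. NC L)" by blast
    qed
  qed
  have nZ: "- Z \<in> null_sets \<nu>" unfolding UNC[symmetric] using null by (intro null_sets_UN) auto
  have sing: "{x} \<in> sets \<nu>" if "x = F \<or> x = T" for x
  proof -
    have "{x} = (\<Inter>n. {z. \<forall>i<n. z i = x i})" by (auto simp: fun_eq_iff)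
    moreover have "{z. \<forall>i<n. z i = x i} \<in> sets \<nu>" for n
      unfolding sets by (rule fd_sets[of n]) auto
    ultimately show ?thesis by simp
  qed
  have FT: "F \<noteq> T" unfolding F_def T_def by (simp add: fun_eq_iff)
  have mZ: "measure \<nu> {F} + measure \<nu> {T} = 1"
  proof -
    have "emeasure \<nu> (UNIV - (- Z)) = emeasure \<nu> UNIV"
      by (rule emeasure_Diff_null_set[OF nZ]) (simp add: sp[symmetric])
    then have "measure \<nu> Z = 1" using emeasure_space_1 sp by (simp add: emeasure_eq_measure)
    moreover have "measure \<nu> Z = measure \<nu> {F} + measure \<nu> {T}"
      unfolding Z_def using finite_measure_Union[of "{F}" "{T}"] sing FT by (simp add: insert_commute)
    ultimately show ?thesis by simp
  qed
  show ?thesis unfolding in_conv_deltas_def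
  proof (intro conjI exI[of _ "measure \<nu> {F}"] ballI)
    show "sets \<nu> = sets borel" by (rule sets)
    show "0 \<le> measure \<nu> {F}" by simp
    show "measure \<nu> {F} \<le> 1" by simp
  next
    fix A assume A: "A \<in> sets \<nu>"
    have "emeasure \<nu> (A - (- Z)) = emeasure \<nu> A" by (rule emeasure_Diff_null_set[OF nZ A])
    then have eqA: "measure \<nu> A = measure \<nu> (A \<inter> Z)" by (simp add: emeasure_eq_measure Diff_eq)
    have "measure \<nu> (A \<inter> Z) = measure \<nu> {F} * indicator A F + (1 - measure \<nu> {F}) * indicator A T"
    proof (cases "F \<in> A"; cases "T \<in> A")
      assume "F \<in> A" "T \<in> A"
      then have "A \<inter> Z = {F} \<union> {T}" unfolding Z_def by auto
      then show ?thesis using finite_measure_Union[of "{F}" "{T}"] sing FT mZ \<open>F \<in> A\<close> \<open>T \<in> A\<close> by simp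
    next
      assume "F \<in> A" "T \<notin> A"
      then have "A \<inter> Z = {F}" unfolding Z_def by auto
      then show ?thesis using \<open>F \<in> A\<close> \<open>T \<notin> A\<close> by simp
    next
      assume "F \<notin> A" "T \<in> A"
      then have "A \<inter> Z = {T}" unfolding Z_def by auto
      then show ?thesis using \<open>F \<notin> A\<close> \<open>T \<in> A\<close> mZ by simp
    next
      assume "F \<notin> A" "T \<notin> A"
      then have "A \<inter> Z = {}" unfolding Z_def by auto
      then show ?thesis using \<open>F \<notin> A\<close> \<open>T \<notin> A\<close> by simp
    qed
    then show "emeasure \<nu> A = ennreal (measure \<nu> {F} * indicator A (\<lambda>_. False) + (1 - measure \<nu> {F}) * indicator A (\<lambda>_. True))"
      using eqA unfolding F_def[symmetric] T_def[symmetric] by (simp add: emeasure_eq_measure)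
  qed
qed

theorem mainTheorem1:
  fixes S :: "nat set"
  assumes "infinite S"
  shows "superficial S \<longleftrightarrow>
    (\<exists>A B C :: nat set.
       A \<union> B \<union> C = UNIV \<and> A \<inter> B = {} \<and> A \<inter> C = {} \<and> B \<inter> C = {} \<and>
       density_zero A \<and>
       (B = {} \<or> union_long_intervals B) \<and> B \<subseteq> S \<and>
       (C = {} \<or> union_long_intervals C) \<and> C \<inter> S = {})"
proof
  assume sup: "superficial S"
  define y where "y = ind_seq S"
  have yS: "y i \<longleftrightarrow> i \<in> S" for i unfolding y_def ind_seq_def by simp
  have H: "\<And>L. (\<lambda>n. real (card {i. i < n \<and> nc y L i}) / real n) \<longlonglongrightarrow> 0"
    unfolding y_def by (rule sup_imp_H[OF sup])
  obtain A0 where dA0: "density_zero A0" and PPv: "\<And>v. PP (-A0 \<inter> {i. y i = v})"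
    using comb1[OF H] by blast
  define B0 where "B0 = -A0 \<inter> S"
  define C0 where "C0 = -A0 - S"
  have PB0: "PP B0" using PPv[of True] unfolding B0_def using yS by (metis (mono_tags, lifting) Collect_mem_eq Collect_cong)
  have PC0: "PP C0"
  proof -
    have "-A0 \<inter> {i. y i = False} = C0" unfolding C0_def using yS by auto
    then show ?thesis using PPv[of False] by simp
  qed
  define FB where "FB = (if finite B0 then B0 else {})"
  define FC where "FC = (if finite C0 then C0 else {})"
  define B where "B = (if finite B0 then {} else B0)"
  define C where "C = (if finite C0 then {} else C0)"
  define A where "A = A0 \<union> FB \<union> FC"
  have finFB: "finite FB" unfolding FB_def by simp
  have finFC: "finite FC" unfolding FC_def by simp
  have dA: "density_zero A" unfolding A_def
    by (intro density_zero_Un dA0 density_zero_finite finFB finFC)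
  have Bu: "B = {} \<or> union_long_intervals B"
  proof (cases "finite B0")
    case False then show ?thesis unfolding B_def using PP_imp_uli[OF False PB0] by simp
  qed (simp add: B_def)
  have Cu: "C = {} \<or> union_long_intervals C"
  proof (cases "finite C0")
    case False then show ?thesis unfolding C_def using PP_imp_uli[OF False PC0] by simp
  qed (simp add: C_def)
  have "A \<union> B \<union> C = UNIV \<and> A \<inter> B = {} \<and> A \<inter> C = {} \<and> B \<inter> C = {} \<and> B \<subseteq> S \<and> C \<inter> S = {}"
    unfolding A_def B_def C_def FB_def FC_def B0_def C0_def by auto
  then show "\<exists>A B C :: nat set.
       A \<union> B \<union> C = UNIV \<and> A \<inter> B = {} \<and> A \<inter> C = {} \<and> B \<inter> C = {} \<and>
       density_zero A \<and>
       (B = {} \<or> union_long_intervals B) \<and> B \<subseteq> S \<and>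
       (C = {} \<or> union_long_intervals C) \<and> C \<inter> S = {}"
    using dA Bu Cu by blast
next
  assume "\<exists>A B C :: nat set.
       A \<union> B \<union> C = UNIV \<and> A \<inter> B = {} \<and> A \<inter> C = {} \<and> B \<inter> C = {} \<and>
       density_zero A \<and>
       (B = {} \<or> union_long_intervals B) \<and> B \<subseteq> S \<and>
       (C = {} \<or> union_long_intervals C) \<and> C \<inter> S = {}"
  then obtain A B C :: "nat set" where part: "A \<union> B \<union> C = UNIV" and BC: "B \<inter> C = {}"
    and dA: "density_zero A" and Bu: "B = {} \<or> union_long_intervals B" and BS: "B \<subseteq> S"
    and Cu: "C = {} \<or> union_long_intervals C" and CS: "C \<inter> S = {}"
    by blast
  have PB: "PP B" using Bu PP_empty uli_imp_PP by blast
  have PC: "PP C" using Cu PP_empty uli_imp_PP by blast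
  have H: "\<And>L. (\<lambda>n. real (card {i. i < n \<and> nc (ind_seq S) L i}) / real n) \<longlonglongrightarrow> 0"
    unfolding ind_seq_def by (rule comb2[OF part BC dA PB PC BS CS])
  show "superficial S" unfolding superficial_def quasi_generated_set_def
    using assms H_imp_conv[OF H] by blast
qed

end
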